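(* Let $\mu$ be a limit ordinal and let $\langle \mathcal B^\nu:\nu<\mu\rangle$ be a $\preceq$-increasing sequence of base-enumerations, $\mathcal B^\nu=\langle B^\nu_i:i<\xi^\nu\rangle$, generating topologies $\tau^\nu$ on sets $X^\nu$. Put $\xi^\mu=\sup_{\nu<\mu}\xi^\nu$ and, for $i<\xi^\mu$, $B^\mu_i=\bigcup\{B^\nu_i:\nu<\mu,\ i<\xi^\nu\}$. Then $\mathcal B^\mu=\langle B^\mu_i:i<\xi^\mu\rangle$ is a base-enumeration and $\mathcal B^\nu\preceq\mathcal B^\mu$ for each $\nu<\mu$. Moreover, if $\tau^\nu$ is Hausdorff for cofinally many $\nu<\mu$, then the topology $\tau^\mu$ generated by $\mathcal B^\mu$ is Hausdorff. Finally, if $\sigma<\mu$, $a\in X^\sigma$, $A\subseteq X^\sigma$ and $a\in\overline{A}^{\tau^\nu}$ for every $\nu$ with $\sigma<\nu<\mu$, then $a\in\overline{A}^{\tau^\mu}$.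
   Context: A base-enumeration is a sequence $\langle B_i:i<\xi\rangle$, for some ordinal $\xi$, such that $\{B_i:i<\xi\}$ is a base consisting of clopen sets for a (not necessarily Hausdorff) topology $\tau$ on some set $X$ (namely $X=\bigcup_i B_i$). For base-enumerations $\mathcal B^0=\langle B^0_i:i<\xi^0\rangle$ on $X^0$ and $\mathcal B^1=\langle B^1_i:i<\xi^1\rangle$ on $X^1$, write $\mathcal B^0\preceq\mathcal B^1$ iff (1) $X^0\subseteq X^1$ and $\xi^0\le\xi^1$; (2) $B^0_i=B^1_i\cap X^0$ for $i<\xi^0$; (3) for $i,j<\xi^0$, $B^0_i\subseteq B^0_j$ iff $B^1_i\subseteq B^1_j$; (4) for $i,j<\xi^0$, $B^0_i\cap B^0_j=\emptyset$ iff $B^1_i\cap B^1_j=\emptyset$. *)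

theory Defs
  imports "HOL-Analysis.Analysis"
begin

text \<open>Ordinals are represented by initial segments of a well-ordered type:
  an ordinal xi is the set of indices i < xi.\<close>

definition init_seg :: "'i::wellorder set \<Rightarrow> bool" where
  "init_seg I \<longleftrightarrow> (\<forall>i\<in>I. \<forall>j. j < i \<longrightarrow> j \<in> I)"

definition limit_seg :: "'i::wellorder set \<Rightarrow> bool" where
  "limit_seg M \<longleftrightarrow> init_seg M \<and> M \<noteq> {} \<and> (\<forall>v\<in>M. \<exists>w\<in>M. v < w)"

definition enum_space :: "'i set \<Rightarrow> ('i \<Rightarrow> 'a set) \<Rightarrow> 'a set" where
  "enum_space I B = (\<Union>i\<in>I. B i)"

definition gen_open :: "'i set \<Rightarrow> ('i \<Rightarrow> 'a set) \<Rightarrow> 'a set \<Rightarrow> bool" where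
  "gen_open I B U \<longleftrightarrow> (\<exists>F. F \<subseteq> B ` I \<and> U = \<Union>F)"

definition gen_top :: "'i set \<Rightarrow> ('i \<Rightarrow> 'a set) \<Rightarrow> 'a topology" where
  "gen_top I B = topology (gen_open I B)"

definition base_enum :: "'i::wellorder set \<Rightarrow> ('i \<Rightarrow> 'a set) \<Rightarrow> bool" where
  "base_enum I B \<longleftrightarrow> init_seg I \<and> istopology (gen_open I B)
     \<and> (\<forall>i\<in>I. openin (gen_top I B) (B i) \<and> closedin (gen_top I B) (B i))"

definition enum_prec ::
  "'i::wellorder set \<Rightarrow> ('i \<Rightarrow> 'a set) \<Rightarrow> 'i set \<Rightarrow> ('i \<Rightarrow> 'a set) \<Rightarrow> bool" where
  "enum_prec I0 B0 I1 B1 \<longleftrightarrow>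
     enum_space I0 B0 \<subseteq> enum_space I1 B1 \<and> I0 \<subseteq> I1
     \<and> (\<forall>i\<in>I0. B0 i = B1 i \<inter> enum_space I0 B0)
     \<and> (\<forall>i\<in>I0. \<forall>j\<in>I0. B0 i \<subseteq> B0 j \<longleftrightarrow> B1 i \<subseteq> B1 j)
     \<and> (\<forall>i\<in>I0. \<forall>j\<in>I0. B0 i \<inter> B0 j = {} \<longleftrightarrow> B1 i \<inter> B1 j = {})"

text \<open>The limit enumeration: xi^mu = sup of xi^nu, B^mu_i = union of the B^nu_i.\<close>
definition lim_idx :: "'n set \<Rightarrow> ('n \<Rightarrow> 'i set) \<Rightarrow> 'i set" where
  "lim_idx M Is = (\<Union>v\<in>M. Is v)"

definition lim_base :: "'n set \<Rightarrow> ('n \<Rightarrow> 'i set) \<Rightarrow> ('n \<Rightarrow> 'i \<Rightarrow> 'a set) \<Rightarrow> 'i \<Rightarrow> 'a set" where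
  "lim_base M Is Bs i = \<Union>{Bs v i | v. v \<in> M \<and> i \<in> Is v}"

end

theory Submission imports Defs begin

lemma gen_open_iff:
  "gen_open I B U \<longleftrightarrow> (\<forall>x\<in>U. \<exists>k\<in>I. x \<in> B k \<and> B k \<subseteq> U)"
proof
  assume "gen_open I B U"
  then obtain F where "F \<subseteq> B ` I" "U = \<Union>F" unfolding gen_open_def by blast
  then show "\<forall>x\<in>U. \<exists>k\<in>I. x \<in> B k \<and> B k \<subseteq> U" by blast
next
  assume h: "\<forall>x\<in>U. \<exists>k\<in>I. x \<in> B k \<and> B k \<subseteq> U"
  have "U = \<Union>{B k | k. k \<in> I \<and> B k \<subseteq> U}" using h by blast
  moreover have "{B k | k. k \<in> I \<and> B k \<subseteq> U} \<subseteq> B ` I" by blast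
  ultimately show "gen_open I B U" unfolding gen_open_def by blast
qed

definition basis_cond where
  "basis_cond I B \<longleftrightarrow> (\<forall>i\<in>I. \<forall>j\<in>I. \<forall>x\<in>B i \<inter> B j. \<exists>k\<in>I. x \<in> B k \<and> B k \<subseteq> B i \<inter> B j)"

lemma istop_iff: "istopology (gen_open I B) \<longleftrightarrow> basis_cond I B"
proof
  assume t: "istopology (gen_open I B)"
  show "basis_cond I B" unfolding basis_cond_def
  proof (intro ballI)
    fix i j x assume "i \<in> I" "j \<in> I" "x \<in> B i \<inter> B j"
    have "gen_open I B (B i)" "gen_open I B (B j)" using \<open>i\<in>I\<close> \<open>j\<in>I\<close> by (auto simp: gen_open_iff)
    then have "gen_open I B (B i \<inter> B j)" using t unfolding istopology_def by blast
    then show "\<exists>k\<in>I. x \<in> B k \<and> B k \<subseteq> B i \<inter> B j" using \<open>x \<in> _\<close> by (simp add: gen_open_iff)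
  qed
next
  assume b: "basis_cond I B"
  show "istopology (gen_open I B)" unfolding istopology_def
  proof (intro conjI allI impI)
    fix S T assume S: "gen_open I B S" and T: "gen_open I B T"
    show "gen_open I B (S \<inter> T)" unfolding gen_open_iff
    proof
      fix x assume "x \<in> S \<inter> T"
      then obtain i j where "i \<in> I" "j\<in>I" "x \<in> B i" "B i \<subseteq> S" "x \<in> B j" "B j \<subseteq> T"
        using S T unfolding gen_open_iff by blast
      then obtain k where "k \<in> I" "x \<in> B k" "B k \<subseteq> B i \<inter> B j" using b unfolding basis_cond_def by blast
      then show "\<exists>k\<in>I. x \<in> B k \<and> B k \<subseteq> S \<inter> T" using \<open>B i \<subseteq> S\<close> \<open>B j \<subseteq> T\<close> by blast
    qed
  next
    fix K assume "\<forall>K'\<in>K. gen_open I B K'"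
    then show "gen_open I B (\<Union>K)" unfolding gen_open_iff by (meson Union_iff Union_upper order_trans)
  qed
qed

lemma openin_gen: "basis_cond I B \<Longrightarrow> openin (gen_top I B) U \<longleftrightarrow> gen_open I B U"
  by (simp add: gen_top_def istop_iff[symmetric])

lemma topspace_gen: "basis_cond I B \<Longrightarrow> topspace (gen_top I B) = enum_space I B"
proof -
  assume b: "basis_cond I B"
  have "gen_open I B (enum_space I B)" unfolding gen_open_iff enum_space_def by blast
  moreover have "U \<subseteq> enum_space I B" if "gen_open I B U" for U
    using that unfolding gen_open_iff enum_space_def by blast
  ultimately show ?thesis unfolding topspace_def openin_gen[OF b] by blast
qed

lemma base_enum_iff: "base_enum I B \<longleftrightarrow> init_seg I \<and> basis_cond I B \<and>
   (\<forall>i\<in>I. \<forall>x\<in>enum_space I B - B i. \<exists>k\<in>I. x \<in> B k \<and> B k \<inter> B i = {})"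
proof -
  have "(\<forall>i\<in>I. openin (gen_top I B) (B i) \<and> closedin (gen_top I B) (B i)) \<longleftrightarrow>
     (\<forall>i\<in>I. \<forall>x\<in>enum_space I B - B i. \<exists>k\<in>I. x \<in> B k \<and> B k \<inter> B i = {})" if b: "basis_cond I B"
  proof -
    have sub: "B i \<subseteq> enum_space I B" if "i \<in> I" for i using that unfolding enum_space_def by blast
    have op: "gen_open I B (B i)" if "i \<in> I" for i using that unfolding gen_open_iff by blast
    have eq: "gen_open I B (enum_space I B - B i) \<longleftrightarrow> (\<forall>x\<in>enum_space I B - B i. \<exists>k\<in>I. x \<in> B k \<and> B k \<inter> B i = {})"
      for i
    proof -
      have e: "B k \<subseteq> enum_space I B - B i \<longleftrightarrow> B k \<inter> B i = {}" if "k \<in> I" for k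
        using sub[OF that] by blast
      show ?thesis unfolding gen_open_iff
      proof (intro iffI ballI)
        fix x assume "\<forall>x\<in>enum_space I B - B i. \<exists>k\<in>I. x \<in> B k \<and> B k \<subseteq> enum_space I B - B i"
          "x \<in> enum_space I B - B i"
        then obtain k where "k \<in> I" "x \<in> B k" "B k \<subseteq> enum_space I B - B i" by blast
        then show "\<exists>k\<in>I. x \<in> B k \<and> B k \<inter> B i = {}" using e by blast
      next
        fix x assume "\<forall>x\<in>enum_space I B - B i. \<exists>k\<in>I. x \<in> B k \<and> B k \<inter> B i = {}"
          "x \<in> enum_space I B - B i"
        then obtain k where "k \<in> I" "x \<in> B k" "B k \<inter> B i = {}" by blast
        then show "\<exists>k\<in>I. x \<in> B k \<and> B k \<subseteq> enum_space I B - B i" using e by blast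
      qed
    qed
    have "openin (gen_top I B) (B i) \<and> closedin (gen_top I B) (B i) \<longleftrightarrow>
       (\<forall>x\<in>enum_space I B - B i. \<exists>k\<in>I. x \<in> B k \<and> B k \<inter> B i = {})" if "i \<in> I" for i
      unfolding closedin_def openin_gen[OF b] topspace_gen[OF b] eq[symmetric] using sub[OF that] op[OF that] by simp
    then show ?thesis by simp
  qed
  then show ?thesis unfolding base_enum_def istop_iff by blast
qed

context
  fixes M :: "'n::wellorder set" and Is :: "'n \<Rightarrow> 'i::wellorder set" and Bs :: "'n \<Rightarrow> 'i \<Rightarrow> 'a set"
  assumes lim: "limit_seg M"
    and enum: "\<forall>v\<in>M. base_enum (Is v) (Bs v)"
    and incr: "\<forall>v\<in>M. \<forall>w\<in>M. v \<le> w \<longrightarrow> enum_prec (Is v) (Bs v) (Is w) (Bs w)"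
begin

abbreviation "XX v \<equiv> enum_space (Is v) (Bs v)"
abbreviation "LI \<equiv> lim_idx M Is"
abbreviation "LB \<equiv> lim_base M Is Bs"

lemma up: "v \<in> M \<Longrightarrow> w \<in> M \<Longrightarrow> \<exists>u\<in>M. v \<le> u \<and> w \<le> u"
  by (metis linear)

lemma prec: "v \<in> M \<Longrightarrow> w \<in> M \<Longrightarrow> v \<le> w \<Longrightarrow> enum_prec (Is v) (Bs v) (Is w) (Bs w)"
  using incr by blast

lemma monoI: "v \<in> M \<Longrightarrow> w \<in> M \<Longrightarrow> v \<le> w \<Longrightarrow> Is v \<subseteq> Is w"
  by (drule (2) prec) (simp add: enum_prec_def)
lemma monoX: "v \<in> M \<Longrightarrow> w \<in> M \<Longrightarrow> v \<le> w \<Longrightarrow> XX v \<subseteq> XX w"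
  by (drule (2) prec) (simp add: enum_prec_def)
lemma restr: "v \<in> M \<Longrightarrow> w \<in> M \<Longrightarrow> v \<le> w \<Longrightarrow> i \<in> Is v \<Longrightarrow> Bs v i = Bs w i \<inter> XX v"
  by (drule (2) prec) (simp add: enum_prec_def)
lemma monoB: "v \<in> M \<Longrightarrow> w \<in> M \<Longrightarrow> v \<le> w \<Longrightarrow> i \<in> Is v \<Longrightarrow> Bs v i \<subseteq> Bs w i"
  by (drule (3) restr) blast
lemma sub3: "v \<in> M \<Longrightarrow> w \<in> M \<Longrightarrow> v \<le> w \<Longrightarrow> i \<in> Is v \<Longrightarrow> j \<in> Is v \<Longrightarrow> Bs v i \<subseteq> Bs v j \<longleftrightarrow> Bs w i \<subseteq> Bs w j"
  by (drule (2) prec) (unfold enum_prec_def, blast)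
lemma disj4: "v \<in> M \<Longrightarrow> w \<in> M \<Longrightarrow> v \<le> w \<Longrightarrow> i \<in> Is v \<Longrightarrow> j \<in> Is v \<Longrightarrow> Bs v i \<inter> Bs v j = {} \<longleftrightarrow> Bs w i \<inter> Bs w j = {}"
  by (drule (2) prec) (unfold enum_prec_def, blast)

lemma LB_mem: "x \<in> LB i \<longleftrightarrow> (\<exists>v\<in>M. i \<in> Is v \<and> x \<in> Bs v i)"
  unfolding lim_base_def by blast

lemma LI_mem: "i \<in> LI \<longleftrightarrow> (\<exists>v\<in>M. i \<in> Is v)"
  unfolding lim_idx_def by blast

lemma LI_I: "v \<in> M \<Longrightarrow> i \<in> Is v \<Longrightarrow> i \<in> LI"
  unfolding LI_mem by (rule bexI)

lemma XX_mem: "x \<in> XX v \<longleftrightarrow> (\<exists>i\<in>Is v. x \<in> Bs v i)"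
  unfolding enum_space_def by blast

lemma LX: "enum_space LI LB = (\<Union>v\<in>M. XX v)"
proof (rule set_eqI, rule iffI)
  fix x assume "x \<in> enum_space LI LB"
  then obtain i where "i \<in> LI" "x \<in> LB i" unfolding enum_space_def by (rule UN_E)
  then obtain v where v: "v \<in> M" "i \<in> Is v" "x \<in> Bs v i" unfolding LB_mem by (elim bexE conjE)
  then have "x \<in> XX v" unfolding enum_space_def by (rule_tac UN_I)
  then show "x \<in> (\<Union>v\<in>M. XX v)" using v(1) by (rule_tac UN_I)
next
  fix x assume "x \<in> (\<Union>v\<in>M. XX v)"
  then obtain v where v: "v \<in> M" "x \<in> XX v" by (rule UN_E)
  obtain i where i: "i \<in> Is v" "x \<in> Bs v i" using v(2) unfolding enum_space_def by (rule UN_E)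
  have "i \<in> LI" using v i unfolding LI_mem by (rule_tac bexI)
  moreover have "x \<in> LB i" using v i unfolding LB_mem by (rule_tac bexI) auto
  ultimately show "x \<in> enum_space LI LB" unfolding enum_space_def by (rule UN_I)
qed

lemma LB_sup: "v \<in> M \<Longrightarrow> i \<in> Is v \<Longrightarrow> Bs v i \<subseteq> LB i"
  by (auto simp: LB_mem)

lemma LB_restr: "v \<in> M \<Longrightarrow> i \<in> Is v \<Longrightarrow> LB i \<inter> XX v = Bs v i"
proof
  assume v: "v \<in> M" and i: "i \<in> Is v"
  show "Bs v i \<subseteq> LB i \<inter> XX v" using LB_sup[OF v i] i by (auto simp: XX_mem)
  show "LB i \<inter> XX v \<subseteq> Bs v i"
  proof
    fix x assume x: "x \<in> LB i \<inter> XX v"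
    then obtain w where w: "w \<in> M" "i \<in> Is w" "x \<in> Bs w i" by (auto simp: LB_mem)
    show "x \<in> Bs v i"
    proof (cases "w \<le> v")
      case True then show ?thesis using monoB[OF w(1) v True w(2)] w(3) by blast
    next
      case False then have "v \<le> w" by simp
      then show ?thesis using restr[OF v w(1) _ i] w(3) x by blast
    qed
  qed
qed

lemma LB_in: "x \<in> LB i \<Longrightarrow> v \<in> M \<Longrightarrow> \<exists>u\<in>M. v \<le> u \<and> i \<in> Is u \<and> x \<in> Bs u i"
proof -
  assume "x \<in> LB i" "v \<in> M"
  then obtain w where w: "w \<in> M" "i \<in> Is w" "x \<in> Bs w i" by (auto simp: LB_mem)
  obtain u where u: "u \<in> M" "v \<le> u" "w \<le> u" using up[OF \<open>v\<in>M\<close> w(1)] by blast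
  show ?thesis using u monoI[OF w(1) u(1) u(3)] monoB[OF w(1) u(1) u(3) w(2)] w by blast
qed

lemma LB_subset: "v \<in> M \<Longrightarrow> i \<in> Is v \<Longrightarrow> j \<in> Is v \<Longrightarrow> LB i \<subseteq> LB j \<longleftrightarrow> Bs v i \<subseteq> Bs v j"
proof
  assume v: "v \<in> M" and i: "i \<in> Is v" and j: "j \<in> Is v"
  show "LB i \<subseteq> LB j \<Longrightarrow> Bs v i \<subseteq> Bs v j" using LB_restr[OF v i] LB_restr[OF v j] by blast
  assume s: "Bs v i \<subseteq> Bs v j"
  show "LB i \<subseteq> LB j"
  proof
    fix x assume "x \<in> LB i"
    then obtain u where u: "u \<in> M" "v \<le> u" "i \<in> Is u" "x \<in> Bs u i" using LB_in v by blast
    have "Bs u i \<subseteq> Bs u j" using sub3[OF v u(1) u(2) i j] s by blast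
    then show "x \<in> LB j" using u LB_sup[OF u(1)] monoI[OF v u(1) u(2)] j by blast
  qed
qed

lemma LB_disj: "v \<in> M \<Longrightarrow> i \<in> Is v \<Longrightarrow> j \<in> Is v \<Longrightarrow> LB i \<inter> LB j = {} \<longleftrightarrow> Bs v i \<inter> Bs v j = {}"
proof
  assume v: "v \<in> M" and i: "i \<in> Is v" and j: "j \<in> Is v"
  show "LB i \<inter> LB j = {} \<Longrightarrow> Bs v i \<inter> Bs v j = {}" using LB_sup[OF v i] LB_sup[OF v j] by blast
  assume s: "Bs v i \<inter> Bs v j = {}"
  show "LB i \<inter> LB j = {}"
  proof (rule ccontr)
    assume "LB i \<inter> LB j \<noteq> {}"
    then obtain x where x: "x \<in> LB i" "x \<in> LB j" by blast
    then obtain u where u: "u \<in> M" "v \<le> u" "i \<in> Is u" "x \<in> Bs u i" using LB_in v by blast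
    then obtain u' where u': "u' \<in> M" "u \<le> u'" "j \<in> Is u'" "x \<in> Bs u' j" using LB_in x by blast
    have "x \<in> Bs u' i" using monoB[OF u(1) u'(1) u'(2) u(3)] u(4) by blast
    moreover have "Bs u' i \<inter> Bs u' j = {}" using disj4[OF v u'(1) _ i j] s u u' by simp
    ultimately show False using u' by blast
  qed
qed

lemma in_common: "i \<in> LI \<Longrightarrow> x \<in> enum_space LI LB \<Longrightarrow> \<exists>u\<in>M. i \<in> Is u \<and> x \<in> XX u"
proof -
  assume "i \<in> LI" "x \<in> enum_space LI LB"
  then obtain v w where v: "v \<in> M" "i \<in> Is v" and w: "w \<in> M" "x \<in> XX w" by (auto simp: LI_mem LX)
  obtain u where u: "u \<in> M" "v \<le> u" "w \<le> u" using up[OF v(1) w(1)] by blast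
  then show ?thesis using monoI[OF v(1) u(1) u(2)] monoX[OF w(1) u(1) u(3)] v w by blast
qed

lemma part1: "base_enum LI LB"
  unfolding base_enum_iff
proof (intro conjI)
  show "init_seg LI" unfolding init_seg_def
  proof (intro ballI allI impI)
    fix i j assume "i \<in> LI" "(j::'i) < i"
    then obtain v where v: "v \<in> M" "i \<in> Is v" unfolding LI_mem by blast
    have "init_seg (Is v)" using enum v(1) by (simp add: base_enum_def)
    then have "j \<in> Is v" using v(2) \<open>j < i\<close> unfolding init_seg_def by blast
    then show "j \<in> LI" using v(1) unfolding LI_mem by blast
  qed
  show "basis_cond LI LB" unfolding basis_cond_def
  proof (intro ballI)
    fix i j x assume i: "i \<in> LI" and j: "j \<in> LI" and x: "x \<in> LB i \<inter> LB j"
    obtain v1 where v1: "v1 \<in> M" "i \<in> Is v1" using i by (auto simp: LI_mem)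
    obtain v2 where v2: "v2 \<in> M" "j \<in> Is v2" using j by (auto simp: LI_mem)
    obtain v where v: "v \<in> M" "v1 \<le> v" "v2 \<le> v" using up[OF v1(1) v2(1)] by blast
    have iv: "i \<in> Is v" "j \<in> Is v" using monoI[OF v1(1) v(1) v(2)] monoI[OF v2(1) v(1) v(3)] v1 v2 by auto
    obtain u where u: "u \<in> M" "v \<le> u" "i \<in> Is u" "x \<in> Bs u i" using LB_in x v by blast
    obtain u' where u': "u' \<in> M" "u \<le> u'" "j \<in> Is u'" "x \<in> Bs u' j" using LB_in x u by blast
    have iu': "i \<in> Is u'" using monoI[OF u(1) u'(1) u'(2)] u by auto
    have "x \<in> Bs u' i" using monoB[OF u(1) u'(1) u'(2) u(3)] u(4) by blast
    moreover have "basis_cond (Is u') (Bs u')" using enum u'(1) by (simp add: base_enum_iff)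
    ultimately obtain k where k: "k \<in> Is u'" "x \<in> Bs u' k" "Bs u' k \<subseteq> Bs u' i \<inter> Bs u' j"
      using u' iu' unfolding basis_cond_def by blast
    have "LB k \<subseteq> LB i" "LB k \<subseteq> LB j" using LB_subset[OF u'(1) k(1)] k iu' u'(3) by auto
    moreover have "k \<in> LI" using LI_I[OF u'(1) k(1)] .
    ultimately show "\<exists>k\<in>LI. x \<in> LB k \<and> LB k \<subseteq> LB i \<inter> LB j" using LB_sup[OF u'(1) k(1)] k by blast
  qed
  show "\<forall>i\<in>LI. \<forall>x\<in>enum_space LI LB - LB i. \<exists>k\<in>LI. x \<in> LB k \<and> LB k \<inter> LB i = {}"
  proof (intro ballI)
    fix i x assume i: "i \<in> LI" and x: "x \<in> enum_space LI LB - LB i"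
    obtain u where u: "u \<in> M" "i \<in> Is u" "x \<in> XX u" using in_common i x by blast
    have "x \<notin> Bs u i" using x LB_sup[OF u(1,2)] by blast
    then obtain k where k: "k \<in> Is u" "x \<in> Bs u k" "Bs u k \<inter> Bs u i = {}"
      using enum u unfolding base_enum_iff by blast
    have "LB k \<inter> LB i = {}" using LB_disj[OF u(1) k(1) u(2)] k(3) by simp
    moreover have "x \<in> LB k" using LB_sup[OF u(1) k(1)] k(2) by (rule subsetD)
    ultimately show "\<exists>k\<in>LI. x \<in> LB k \<and> LB k \<inter> LB i = {}"
      using LI_I[OF u(1) k(1)] by (intro bexI[of _ k] conjI)
  qed
qed

lemma part2: "v \<in> M \<Longrightarrow> enum_prec (Is v) (Bs v) LI LB"
proof -
  assume v: "v \<in> M"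
  have 1: "XX v \<subseteq> enum_space LI LB" unfolding LX by (rule UN_upper[OF v])
  have 2: "Is v \<subseteq> LI" using LI_I[OF v] by (rule subsetI)
  have 3: "\<forall>i\<in>Is v. Bs v i = LB i \<inter> XX v" by (intro ballI, rule LB_restr[OF v, symmetric])
  have 4: "\<forall>i\<in>Is v. \<forall>j\<in>Is v. Bs v i \<subseteq> Bs v j \<longleftrightarrow> LB i \<subseteq> LB j" by (intro ballI, rule LB_subset[OF v, symmetric])
  have 5: "\<forall>i\<in>Is v. \<forall>j\<in>Is v. Bs v i \<inter> Bs v j = {} \<longleftrightarrow> LB i \<inter> LB j = {}" by (intro ballI, rule LB_disj[OF v, symmetric])
  show ?thesis unfolding enum_prec_def using 1 2 3 4 5 by (intro conjI)
qed

lemma bc_L: "basis_cond LI LB" using part1 unfolding base_enum_iff by (elim conjE)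

lemma part3:
  assumes H: "\<forall>v\<in>M. \<exists>w\<in>M. v \<le> w \<and> Hausdorff_space (gen_top (Is w) (Bs w))"
  shows "Hausdorff_space (gen_top LI LB)"
  unfolding Hausdorff_space_def topspace_gen[OF bc_L] openin_gen[OF bc_L]
proof (intro allI impI)
  fix x y assume xy: "x \<in> enum_space LI LB \<and> y \<in> enum_space LI LB \<and> x \<noteq> y"
  have "x \<in> (\<Union>v\<in>M. XX v)" using xy unfolding LX by (elim conjE)
  then obtain v1 where v1: "v1 \<in> M" "x \<in> XX v1" by (rule UN_E)
  have "y \<in> (\<Union>v\<in>M. XX v)" using xy unfolding LX by (elim conjE)
  then obtain v2 where v2: "v2 \<in> M" "y \<in> XX v2" by (rule UN_E)
  obtain v where v: "v \<in> M" "v1 \<le> v" "v2 \<le> v" using up[OF v1(1) v2(1)] by blast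
  obtain w where w: "w \<in> M" "v \<le> w" "Hausdorff_space (gen_top (Is w) (Bs w))" using H v(1) by blast
  have "v1 \<le> w" "v2 \<le> w" using v(2,3) w(2) by (meson order_trans)+
  then have xw: "x \<in> XX w" "y \<in> XX w" using monoX[OF v1(1) w(1)] monoX[OF v2(1) w(1)] v1(2) v2(2) by blast+
  have bw: "basis_cond (Is w) (Bs w)" using enum w(1) by (simp add: base_enum_iff)
  have xt: "x \<in> topspace (gen_top (Is w) (Bs w))" "y \<in> topspace (gen_top (Is w) (Bs w))"
    using xw topspace_gen[OF bw] by simp_all
  have "x \<noteq> y" using xy by simp
  then have "\<exists>U V. openin (gen_top (Is w) (Bs w)) U \<and> openin (gen_top (Is w) (Bs w)) V \<and> x \<in> U \<and> y \<in> V \<and> disjnt U V"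
    using w(3) xt unfolding Hausdorff_space_def by blast
  then obtain U V where UV: "gen_open (Is w) (Bs w) U" "gen_open (Is w) (Bs w) V" "x \<in> U" "y \<in> V" "disjnt U V"
    unfolding openin_gen[OF bw] by blast
  obtain i where i: "i \<in> Is w" "x \<in> Bs w i" "Bs w i \<subseteq> U" using UV(1,3) unfolding gen_open_iff by blast
  obtain j where j: "j \<in> Is w" "y \<in> Bs w j" "Bs w j \<subseteq> V" using UV(2,4) unfolding gen_open_iff by blast
  have "Bs w i \<inter> Bs w j = {}" using i(3) j(3) UV(5) unfolding disjnt_def by blast
  then have d: "LB i \<inter> LB j = {}" using LB_disj[OF w(1) i(1) j(1)] by simp
  have oi: "gen_open LI LB (LB i)" "gen_open LI LB (LB j)"
    unfolding gen_open_iff using LI_I[OF w(1) i(1)] LI_I[OF w(1) j(1)] by blast+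
  have xi: "x \<in> LB i" using LB_sup[OF w(1) i(1)] i(2) by (rule subsetD)
  have yj: "y \<in> LB j" using LB_sup[OF w(1) j(1)] j(2) by (rule subsetD)
  have dj: "disjnt (LB i) (LB j)" using d unfolding disjnt_def .
  show "\<exists>U V. gen_open LI LB U \<and> gen_open LI LB V \<and> x \<in> U \<and> y \<in> V \<and> disjnt U V"
    using oi xi yj dj by (intro exI conjI)
qed

lemma part4:
  assumes s: "s \<in> M" and a: "a \<in> XX s" and A: "A \<subseteq> XX s"
    and cl: "\<forall>v\<in>M. s < v \<longrightarrow> a \<in> gen_top (Is v) (Bs v) closure_of A"
  shows "a \<in> gen_top LI LB closure_of A"
  unfolding closure_of_def topspace_gen[OF bc_L] openin_gen[OF bc_L]
proof (intro CollectI conjI allI impI)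
  show "a \<in> enum_space LI LB" unfolding LX using s a by (rule UN_I)
  fix T assume T: "a \<in> T \<and> gen_open LI LB T"
  then obtain i where i: "i \<in> LI" "a \<in> LB i" "LB i \<subseteq> T" unfolding gen_open_iff by blast
  obtain v where v: "v \<in> M" "i \<in> Is v" using i(1) unfolding LI_mem by (rule bexE)
  obtain s' where s': "s' \<in> M" "s < s'" using lim s unfolding limit_seg_def by blast
  obtain w where w: "w \<in> M" "v \<le> w" "s' \<le> w" using up[OF v(1) s'(1)] by blast
  have sw: "s < w" using s'(2) w(3) by (rule less_le_trans)
  have iw: "i \<in> Is w" using monoI[OF v(1) w(1) w(2)] v(2) by (rule subsetD)
  have aw: "a \<in> XX w" using monoX[OF s w(1) less_imp_le[OF sw]] a by (rule subsetD)
  have aB: "a \<in> Bs w i" using LB_restr[OF w(1) iw] aw i(2) by blast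
  have bw: "basis_cond (Is w) (Bs w)" using enum w(1) by (simp add: base_enum_iff)
  have op: "openin (gen_top (Is w) (Bs w)) (Bs w i)" unfolding openin_gen[OF bw] gen_open_iff using iw by blast
  have "a \<in> gen_top (Is w) (Bs w) closure_of A" using cl w(1) sw by blast
  then have "\<forall>T. a \<in> T \<and> openin (gen_top (Is w) (Bs w)) T \<longrightarrow> (\<exists>y\<in>A. y \<in> T)"
    unfolding closure_of_def by (elim CollectE conjE)
  then have "\<exists>y\<in>A. y \<in> Bs w i" using aB op by blast
  then obtain y where "y \<in> A" "y \<in> Bs w i" by (rule bexE)
  then show "\<exists>y\<in>A. y \<in> T" using LB_sup[OF w(1) iw] i(3) by blast
qed

end

theorem lemma2p2:
  fixes M :: "'n::wellorder set"
    and Is :: "'n \<Rightarrow> 'i::wellorder set"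
    and Bs :: "'n \<Rightarrow> 'i \<Rightarrow> 'a set"
  assumes lim: "limit_seg M"
    and enum: "\<forall>v\<in>M. base_enum (Is v) (Bs v)"
    and incr: "\<forall>v\<in>M. \<forall>w\<in>M. v \<le> w \<longrightarrow> enum_prec (Is v) (Bs v) (Is w) (Bs w)"
  shows "base_enum (lim_idx M Is) (lim_base M Is Bs)
    \<and> (\<forall>v\<in>M. enum_prec (Is v) (Bs v) (lim_idx M Is) (lim_base M Is Bs))
    \<and> ((\<forall>v\<in>M. \<exists>w\<in>M. v \<le> w \<and> Hausdorff_space (gen_top (Is w) (Bs w)))
         \<longrightarrow> Hausdorff_space (gen_top (lim_idx M Is) (lim_base M Is Bs)))
    \<and> (\<forall>s\<in>M. \<forall>a A. a \<in> enum_space (Is s) (Bs s) \<and> A \<subseteq> enum_space (Is s) (Bs s)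
         \<and> (\<forall>v\<in>M. s < v \<longrightarrow> a \<in> gen_top (Is v) (Bs v) closure_of A)
         \<longrightarrow> a \<in> gen_top (lim_idx M Is) (lim_base M Is Bs) closure_of A)"
proof (intro conjI)
  show "base_enum (lim_idx M Is) (lim_base M Is Bs)" using part1[OF lim enum incr] .
  show "\<forall>v\<in>M. enum_prec (Is v) (Bs v) (lim_idx M Is) (lim_base M Is Bs)" using part2[OF lim enum incr] by blast
  show "(\<forall>v\<in>M. \<exists>w\<in>M. v \<le> w \<and> Hausdorff_space (gen_top (Is w) (Bs w)))
         \<longrightarrow> Hausdorff_space (gen_top (lim_idx M Is) (lim_base M Is Bs))" using part3[OF lim enum incr] by blast
  show "\<forall>s\<in>M. \<forall>a A. a \<in> enum_space (Is s) (Bs s) \<and> A \<subseteq> enum_space (Is s) (Bs s)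
         \<and> (\<forall>v\<in>M. s < v \<longrightarrow> a \<in> gen_top (Is v) (Bs v) closure_of A)
         \<longrightarrow> a \<in> gen_top (lim_idx M Is) (lim_base M Is Bs) closure_of A" using part4[OF lim enum incr] by blast
qed

end
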